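(* Let $A\to M$, $B\to M$ be Lie algebroids, $(\nabla^{AB},\nabla^{AC},R_A)$ a 2-representation of $A$ on $\partial_B\colon C\to B$ and $(\nabla^{BA},\nabla^{BC},R_B)$ a 2-representation of $B$ on $\partial_A\colon C\to A$ forming a matched pair. Then $C$ is a Lie algebroid with anchor $\rho_C:=\rho_A\circ\partial_A=\rho_B\circ\partial_B$ and bracket $[c_1,c_2]=\nabla_{\partial_Ac_1}c_2-\nabla_{\partial_Bc_2}c_1$, and $\partial_A\colon C\to A$ and $\partial_B\colon C\to B$ are Lie algebroid morphisms.
   Context: A 2-representation of a Lie algebroid $A$ on a complex $\partial_B\colon C\to B$ is a triple $(\nabla^{AB},\nabla^{AC},R_A)$: $A$-connections on $B$ and $C$ with $\partial_B\circ\nabla^{AC}=\nabla^{AB}\circ\partial_B$, and $R_A\in\Omega^2(A,\mathrm{Hom}(B,C))$ with $R_{\nabla^{AC}}=R_A\circ\partial_B$, $R_{\nabla^{AB}}=\partial_B\circ R_A$, $\mathrm d_{\nabla^{\mathrm{Hom}}}R_A=0$. Similarly for $B$ on $\partial_A\colon C\to A$ with $R_B\in\Omega^2(B,\mathrm{Hom}(A,C))$. Writing $\nabla$ for all four connections, they form a matched pair if for all $a,a_i\in\Gamma(A)$, $b,b_i\in\Gamma(B)$, $c,c_i\in\Gamma(C)$: (M1) $\rho_A\partial_A=\rho_B\partial_B$; (M2) $\nabla_{\partial_Ac_1}c_2-\nabla_{\partial_Bc_2}c_1=-\nabla_{\partial_Ac_2}c_1+\nabla_{\partial_Bc_1}c_2$;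 (M3) $[a,\partial_Ac]=\partial_A(\nabla_ac)-\nabla_{\partial_Bc}a$; (M4) $[b,\partial_Bc]=\partial_B(\nabla_bc)-\nabla_{\partial_Ac}b$; (M5) $[\rho_A(a),\rho_B(b)]=\rho_B(\nabla_ab)-\rho_A(\nabla_ba)$; (M6) $\nabla_b\nabla_ac-\nabla_a\nabla_bc-\nabla_{\nabla_ba}c+\nabla_{\nabla_ab}c=R_B(b,\partial_Bc)a-R_A(a,\partial_Ac)b$; (M7) $\partial_A(R_A(a_1,a_2)b)=-\nabla_b[a_1,a_2]+[\nabla_ba_1,a_2]+[a_1,\nabla_ba_2]+\nabla_{\nabla_{a_2}b}a_1-\nabla_{\nabla_{a_1}b}a_2$; (M8) $\partial_B(R_B(b_1,b_2)a)=-\nabla_a[b_1,b_2]+[\nabla_ab_1,b_2]+[b_1,\nabla_ab_2]+\nabla_{\nabla_{b_2}a}b_1-\nabla_{\nabla_{b_1}a}b_2$; (M9) $\mathrm d_{\nabla^A}R_B=\mathrm d_{\nabla^B}R_A$, where $R_B$ is viewed in $\Omega^1(A,\wedge^2B^*\otimes C)$ via $a\mapsto((b_1,b_2)\mapsto R_B(b_1,b_2)a)$, $R_A$ in $\Omega^1(B,\wedge^2A^*\otimes C)$ likewise, $\nabla^A,\nabla^B$ the induced connections on $\wedge^2B^*\otimes C$, $\wedge^2A^*\otimes C$, and $\Omega^2(A,\wedge^2B^*\otimes C)\cong\Omega^2(B,\wedge^2A^*\otimes C)$ via $\omega(a_1,a_2)(b_1,b_2)=\omega'(b_1,b_2)(a_1,a_2)$.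 *)

theory Defs
  imports Main "HOL.Real_Vector_Spaces"
begin

text \<open>Algebraic (Lie--Rinehart / section-level) model of Lie algebroids over a common base M.
  The type 'r plays the role of the smooth functions C-infinity(M) (a commutative real algebra);
  the space of sections of a vector bundle E is a type 'e with a module structure over 'r.
  Vector fields are real-linear derivations of 'r.\<close>

definition module_over :: "('r::comm_ring_1 \<Rightarrow> 'e::ab_group_add \<Rightarrow> 'e) \<Rightarrow> bool" where
  "module_over sm \<longleftrightarrow>
     (\<forall>f x y. sm f (x + y) = sm f x + sm f y) \<and>
     (\<forall>f g x. sm (f + g) x = sm f x + sm g x) \<and>
     (\<forall>f g x. sm (f * g) x = sm f (sm g x)) \<and>
     (\<forall>x. sm 1 x = x)"

definition is_vector_field :: "('r::{comm_ring_1,real_algebra_1} \<Rightarrow> 'r) \<Rightarrow> bool" where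
  "is_vector_field D \<longleftrightarrow>
     (\<forall>f g. D (f + g) = D f + D g) \<and>
     (\<forall>(c::real) f. D (c *\<^sub>R f) = c *\<^sub>R D f) \<and>
     (\<forall>f g. D (f * g) = f * D g + D f * g)"

definition vf_bracket :: "('r::ring \<Rightarrow> 'r) \<Rightarrow> ('r \<Rightarrow> 'r) \<Rightarrow> ('r \<Rightarrow> 'r)" where
  "vf_bracket X Y = (\<lambda>f. X (Y f) - Y (X f))"

text \<open>R-linear maps between section spaces (vector bundle morphisms over the identity).\<close>
definition module_hom ::
  "('r::comm_ring_1 \<Rightarrow> 'e::ab_group_add \<Rightarrow> 'e) \<Rightarrow> ('r \<Rightarrow> 'f::ab_group_add \<Rightarrow> 'f) \<Rightarrow> ('e \<Rightarrow> 'f) \<Rightarrow> bool" where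
  "module_hom smE smF phi \<longleftrightarrow>
     (\<forall>x y. phi (x + y) = phi x + phi y) \<and> (\<forall>f x. phi (smE f x) = smF f (phi x))"

definition lie_algebroid ::
  "('r::{comm_ring_1,real_algebra_1} \<Rightarrow> 'e::ab_group_add \<Rightarrow> 'e) \<Rightarrow> ('e \<Rightarrow> 'r \<Rightarrow> 'r) \<Rightarrow> ('e \<Rightarrow> 'e \<Rightarrow> 'e) \<Rightarrow> bool" where
  "lie_algebroid sm anchor brk \<longleftrightarrow>
     module_over sm \<and>
     (\<forall>e. is_vector_field (anchor e)) \<and>
     (\<forall>e1 e2 f. anchor (e1 + e2) f = anchor e1 f + anchor e2 f) \<and>
     (\<forall>g e f. anchor (sm g e) f = g * anchor e f) \<and>
     (\<forall>e1 e2 e3. brk (e1 + e2) e3 = brk e1 e3 + brk e2 e3) \<and>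
     (\<forall>e1 e2. brk e1 e2 = - brk e2 e1) \<and>
     (\<forall>e1 e2 e3. brk e1 (brk e2 e3) = brk (brk e1 e2) e3 + brk e2 (brk e1 e3)) \<and>
     (\<forall>e1 e2 f. brk e1 (sm f e2) = sm f (brk e1 e2) + sm (anchor e1 f) e2) \<and>
     (\<forall>e1 e2. anchor (brk e1 e2) = vf_bracket (anchor e1) (anchor e2))"

definition is_connection ::
  "('r::comm_ring_1 \<Rightarrow> 'a::ab_group_add \<Rightarrow> 'a) \<Rightarrow> ('a \<Rightarrow> 'r \<Rightarrow> 'r) \<Rightarrow>
   ('r \<Rightarrow> 'v::ab_group_add \<Rightarrow> 'v) \<Rightarrow> ('a \<Rightarrow> 'v \<Rightarrow> 'v) \<Rightarrow> bool" where
  "is_connection smA anchorA smV nabla \<longleftrightarrow>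
     (\<forall>a1 a2 v. nabla (a1 + a2) v = nabla a1 v + nabla a2 v) \<and>
     (\<forall>f a v. nabla (smA f a) v = smV f (nabla a v)) \<and>
     (\<forall>a v1 v2. nabla a (v1 + v2) = nabla a v1 + nabla a v2) \<and>
     (\<forall>a f v. nabla a (smV f v) = smV f (nabla a v) + smV (anchorA a f) v)"

definition curvature ::
  "('a \<Rightarrow> 'a \<Rightarrow> 'a) \<Rightarrow> ('a \<Rightarrow> 'v::ab_group_add \<Rightarrow> 'v) \<Rightarrow> 'a \<Rightarrow> 'a \<Rightarrow> 'v \<Rightarrow> 'v" where
  "curvature brkA nabla a1 a2 v = nabla a1 (nabla a2 (v)) - nabla a2 (nabla a1 v) - nabla (brkA a1 a2) v"

text \<open>Elements of Omega^2(A, Hom(B,C)): maps A x A x B -> C that are R-linear in each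
  argument and alternating in the two A-arguments.\<close>
definition is_hom_2form ::
  "('r::comm_ring_1 \<Rightarrow> 'a::ab_group_add \<Rightarrow> 'a) \<Rightarrow> ('r \<Rightarrow> 'b::ab_group_add \<Rightarrow> 'b) \<Rightarrow>
   ('r \<Rightarrow> 'c::ab_group_add \<Rightarrow> 'c) \<Rightarrow> ('a \<Rightarrow> 'a \<Rightarrow> 'b \<Rightarrow> 'c) \<Rightarrow> bool" where
  "is_hom_2form smA smB smC \<omega> \<longleftrightarrow>
     (\<forall>a1 a1' a2 b. \<omega> (a1 + a1') a2 b = \<omega> a1 a2 b + \<omega> a1' a2 b) \<and>
     (\<forall>f a1 a2 b. \<omega> (smA f a1) a2 b = smC f (\<omega> a1 a2 b)) \<and>
     (\<forall>a1 a2 a2' b. \<omega> a1 (a2 + a2') b = \<omega> a1 a2 b + \<omega> a1 a2' b) \<and>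
     (\<forall>f a1 a2 b. \<omega> a1 (smA f a2) b = smC f (\<omega> a1 a2 b)) \<and>
     (\<forall>a1 a2 b b'. \<omega> a1 a2 (b + b') = \<omega> a1 a2 b + \<omega> a1 a2 b') \<and>
     (\<forall>f a1 a2 b. \<omega> a1 a2 (smB f b) = smC f (\<omega> a1 a2 b)) \<and>
     (\<forall>a b. \<omega> a a b = 0)"

text \<open>Exterior covariant derivative d_{nabla^Hom} of omega in Omega^2(A,Hom(B,C)), where
  (nabla^Hom_a phi)(b) = nabla^{AC}_a (phi b) - phi (nabla^{AB}_a b); evaluated at (a1,a2,a3) and b.\<close>
definition d_hom_2form ::
  "('a \<Rightarrow> 'a \<Rightarrow> 'a) \<Rightarrow> ('a \<Rightarrow> 'b \<Rightarrow> 'b) \<Rightarrow> ('a \<Rightarrow> 'c::ab_group_add \<Rightarrow> 'c) \<Rightarrow>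
   ('a \<Rightarrow> 'a \<Rightarrow> 'b \<Rightarrow> 'c) \<Rightarrow> 'a \<Rightarrow> 'a \<Rightarrow> 'a \<Rightarrow> 'b \<Rightarrow> 'c" where
  "d_hom_2form brkA nAB nAC \<omega> a1 a2 a3 b =
     (let nH = (\<lambda>a \<phi> b. nAC a (\<phi> b) - \<phi> (nAB a b)) in
        nH a1 (\<omega> a2 a3) b - nH a2 (\<omega> a1 a3) b + nH a3 (\<omega> a1 a2) b
      - \<omega> (brkA a1 a2) a3 b + \<omega> (brkA a1 a3) a2 b - \<omega> (brkA a2 a3) a1 b)"

definition two_representation ::
  "('r::{comm_ring_1,real_algebra_1} \<Rightarrow> 'a::ab_group_add \<Rightarrow> 'a) \<Rightarrow> ('a \<Rightarrow> 'r \<Rightarrow> 'r) \<Rightarrow> ('a \<Rightarrow> 'a \<Rightarrow> 'a) \<Rightarrow>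
   ('r \<Rightarrow> 'b::ab_group_add \<Rightarrow> 'b) \<Rightarrow> ('r \<Rightarrow> 'c::ab_group_add \<Rightarrow> 'c) \<Rightarrow> ('c \<Rightarrow> 'b) \<Rightarrow>
   ('a \<Rightarrow> 'b \<Rightarrow> 'b) \<Rightarrow> ('a \<Rightarrow> 'c \<Rightarrow> 'c) \<Rightarrow> ('a \<Rightarrow> 'a \<Rightarrow> 'b \<Rightarrow> 'c) \<Rightarrow> bool" where
  "two_representation smA anchorA brkA smB smC dB nAB nAC RA \<longleftrightarrow>
     module_over smB \<and> module_over smC \<and> module_hom smC smB dB \<and>
     is_connection smA anchorA smB nAB \<and> is_connection smA anchorA smC nAC \<and>
     (\<forall>a c. dB (nAC a c) = nAB a (dB c)) \<and>
     is_hom_2form smA smB smC RA \<and>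
     (\<forall>a1 a2 c. curvature brkA nAC a1 a2 c = RA a1 a2 (dB c)) \<and>
     (\<forall>a1 a2 b. curvature brkA nAB a1 a2 b = dB (RA a1 a2 b)) \<and>
     (\<forall>a1 a2 a3 b. d_hom_2form brkA nAB nAC RA a1 a2 a3 b = 0)"

text \<open>d_{nabla^A} R_B evaluated at (a1,a2)(b1,b2), where R_B is regarded as the 1-form
  a |-> ((b1,b2) |-> R_B(b1,b2)a) with values in wedge^2 B^* (x) C and nabla^A is the induced
  A-connection (nabla_a psi)(b1,b2) = nabla^{AC}_a (psi(b1,b2)) - psi(nabla_a b1,b2) - psi(b1,nabla_a b2).\<close>
definition d_dual_form ::
  "('a \<Rightarrow> 'a \<Rightarrow> 'a) \<Rightarrow> ('a \<Rightarrow> 'b \<Rightarrow> 'b) \<Rightarrow> ('a \<Rightarrow> 'c::ab_group_add \<Rightarrow> 'c) \<Rightarrow>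
   ('b \<Rightarrow> 'b \<Rightarrow> 'a \<Rightarrow> 'c) \<Rightarrow> 'a \<Rightarrow> 'a \<Rightarrow> 'b \<Rightarrow> 'b \<Rightarrow> 'c" where
  "d_dual_form brkA nAB nAC RB a1 a2 b1 b2 =
     (let \<omega> = (\<lambda>a b1 b2. RB b1 b2 a);
          nW = (\<lambda>a \<psi> b1 b2. nAC a (\<psi> b1 b2) - \<psi> (nAB a b1) b2 - \<psi> b1 (nAB a b2)) in
        nW a1 (\<omega> a2) b1 b2 - nW a2 (\<omega> a1) b1 b2 - \<omega> (brkA a1 a2) b1 b2)"

text \<open>Matched pair conditions (M1)-(M9).\<close>
definition matched_pair ::
  "('a \<Rightarrow> 'r \<Rightarrow> 'r::{comm_ring_1,real_algebra_1}) \<Rightarrow> ('a \<Rightarrow> 'a \<Rightarrow> 'a::ab_group_add) \<Rightarrow>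
   ('b \<Rightarrow> 'r \<Rightarrow> 'r) \<Rightarrow> ('b \<Rightarrow> 'b \<Rightarrow> 'b::ab_group_add) \<Rightarrow>
   ('c::ab_group_add \<Rightarrow> 'a) \<Rightarrow> ('c \<Rightarrow> 'b) \<Rightarrow>
   ('a \<Rightarrow> 'b \<Rightarrow> 'b) \<Rightarrow> ('a \<Rightarrow> 'c \<Rightarrow> 'c) \<Rightarrow> ('a \<Rightarrow> 'a \<Rightarrow> 'b \<Rightarrow> 'c) \<Rightarrow>
   ('b \<Rightarrow> 'a \<Rightarrow> 'a) \<Rightarrow> ('b \<Rightarrow> 'c \<Rightarrow> 'c) \<Rightarrow> ('b \<Rightarrow> 'b \<Rightarrow> 'a \<Rightarrow> 'c) \<Rightarrow> bool" where
  "matched_pair anchorA brkA anchorB brkB dA dB nAB nAC RA nBA nBC RB \<longleftrightarrow>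
     (\<forall>c. anchorA (dA c) = anchorB (dB c)) \<and>
     (\<forall>c1 c2. nAC (dA c1) c2 - nBC (dB c2) c1 = - nAC (dA c2) c1 + nBC (dB c1) c2) \<and>
     (\<forall>a c. brkA a (dA c) = dA (nAC a c) - nBA (dB c) a) \<and>
     (\<forall>b c. brkB b (dB c) = dB (nBC b c) - nAB (dA c) b) \<and>
     (\<forall>a b. vf_bracket (anchorA a) (anchorB b) = (\<lambda>f. anchorB (nAB a b) f - anchorA (nBA b a) f)) \<and>
     (\<forall>a b c. nBC b (nAC a c) - nAC a (nBC b c) - nAC (nBA b a) c + nBC (nAB a b) c
                = RB b (dB c) a - RA a (dA c) b) \<and>
     (\<forall>a1 a2 b. dA (RA a1 a2 b) = - nBA b (brkA a1 a2) + brkA (nBA b a1) a2 + brkA a1 (nBA b a2)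
                                   + nBA (nAB a2 b) a1 - nBA (nAB a1 b) a2) \<and>
     (\<forall>b1 b2 a. dB (RB b1 b2 a) = - nAB a (brkB b1 b2) + brkB (nAB a b1) b2 + brkB b1 (nAB a b2)
                                   + nAB (nBA b2 a) b1 - nAB (nBA b1 a) b2) \<and>
     (\<forall>a1 a2 b1 b2. d_dual_form brkA nAB nAC RB a1 a2 b1 b2 = d_dual_form brkB nBA nBC RA b1 b2 a1 a2)"

definition lie_algebroid_morphism ::
  "('r::comm_ring_1 \<Rightarrow> 'e::ab_group_add \<Rightarrow> 'e) \<Rightarrow> ('e \<Rightarrow> 'r \<Rightarrow> 'r) \<Rightarrow> ('e \<Rightarrow> 'e \<Rightarrow> 'e) \<Rightarrow>
   ('r \<Rightarrow> 'f::ab_group_add \<Rightarrow> 'f) \<Rightarrow> ('f \<Rightarrow> 'r \<Rightarrow> 'r) \<Rightarrow> ('f \<Rightarrow> 'f \<Rightarrow> 'f) \<Rightarrow> ('e \<Rightarrow> 'f) \<Rightarrow> bool" where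
  "lie_algebroid_morphism smE anchorE brkE smF anchorF brkF phi \<longleftrightarrow>
     module_hom smE smF phi \<and>
     (\<forall>e. anchorF (phi e) = anchorE e) \<and>
     (\<forall>e1 e2. phi (brkE e1 e2) = brkF (phi e1) (phi e2))"

end

theory Submission
  imports Defs
begin


lemma hom_diff:
  fixes f :: "'x::ab_group_add \<Rightarrow> 'y::ab_group_add"
  assumes "\<And>x y. f (x + y) = f x + f y"
  shows "f (x - y) = f x - f y" and "f (- x) = - f x"
proof -
  have "f x = f ((x - y) + y)" by simp
  also have "\<dots> = f (x - y) + f y" by (rule assms)
  finally show "f (x - y) = f x - f y" by (simp add: algebra_simps)
  have "f 0 = f (0 + 0)" by simp
  also have "\<dots> = f 0 + f 0" by (rule assms)
  finally have z: "f 0 = 0" by simp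
  have "0 = f (x + - x)" using z by simp
  also have "\<dots> = f x + f (- x)" by (rule assms)
  finally show "f (- x) = - f x" by (simp add: eq_neg_iff_add_eq_0 add.commute)
qed

theorem mainTheorem2:
  fixes smA :: "'r::{comm_ring_1,real_algebra_1} \<Rightarrow> 'a::ab_group_add \<Rightarrow> 'a"
    and smB :: "'r \<Rightarrow> 'b::ab_group_add \<Rightarrow> 'b"
    and smC :: "'r \<Rightarrow> 'c::ab_group_add \<Rightarrow> 'c"
    and anchorA :: "'a \<Rightarrow> 'r \<Rightarrow> 'r" and brkA :: "'a \<Rightarrow> 'a \<Rightarrow> 'a"
    and anchorB :: "'b \<Rightarrow> 'r \<Rightarrow> 'r" and brkB :: "'b \<Rightarrow> 'b \<Rightarrow> 'b"
    and dA :: "'c \<Rightarrow> 'a" and dB :: "'c \<Rightarrow> 'b"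
    and nAB :: "'a \<Rightarrow> 'b \<Rightarrow> 'b" and nAC :: "'a \<Rightarrow> 'c \<Rightarrow> 'c" and RA :: "'a \<Rightarrow> 'a \<Rightarrow> 'b \<Rightarrow> 'c"
    and nBA :: "'b \<Rightarrow> 'a \<Rightarrow> 'a" and nBC :: "'b \<Rightarrow> 'c \<Rightarrow> 'c" and RB :: "'b \<Rightarrow> 'b \<Rightarrow> 'a \<Rightarrow> 'c"
  assumes "lie_algebroid smA anchorA brkA"
    and "lie_algebroid smB anchorB brkB"
    and "two_representation smA anchorA brkA smB smC dB nAB nAC RA"
    and "two_representation smB anchorB brkB smA smC dA nBA nBC RB"
    and "matched_pair anchorA brkA anchorB brkB dA dB nAB nAC RA nBA nBC RB"
  shows "lie_algebroid smC (\<lambda>c. anchorA (dA c)) (\<lambda>c1 c2. nAC (dA c1) c2 - nBC (dB c2) c1)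
       \<and> (\<forall>c. anchorA (dA c) = anchorB (dB c))
       \<and> lie_algebroid_morphism smC (\<lambda>c. anchorA (dA c)) (\<lambda>c1 c2. nAC (dA c1) c2 - nBC (dB c2) c1)
           smA anchorA brkA dA
       \<and> lie_algebroid_morphism smC (\<lambda>c. anchorA (dA c)) (\<lambda>c1 c2. nAC (dA c1) c2 - nBC (dB c2) c1)
           smB anchorB brkB dB"
proof -
  note U1 = assms(1)[unfolded lie_algebroid_def]
  have LA_vf: "\<And>e. is_vector_field (anchorA e)" using U1 by metis
  have LA_add: "\<And>e1 e2 f. anchorA (e1 + e2) f = anchorA e1 f + anchorA e2 f" using U1 by metis
  have LA_sm: "\<And>g e f. anchorA (smA g e) f = g * anchorA e f" using U1 by metis
  have LA_anch: "\<And>e1 e2. anchorA (brkA e1 e2) = vf_bracket (anchorA e1) (anchorA e2)" using U1 by metis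
  note U2 = assms(2)[unfolded lie_algebroid_def]
  have skewB: "\<And>e1 e2. brkB e1 e2 = - brkB e2 e1" using U2 by metis
  note U3 = assms(3)[unfolded two_representation_def module_hom_def is_connection_def]
  have MC: "module_over smC" using U3 by metis
  have dB_add: "\<And>x y. dB (x + y) = dB x + dB y" using U3 by metis
  have dB_sm: "\<And>f x. dB (smC f x) = smB f (dB x)" using U3 by metis
  have nAC_add1: "\<And>a1 a2 v. nAC (a1 + a2) v = nAC a1 v + nAC a2 v" using U3 by metis
  have nAC_add2: "\<And>a v1 v2. nAC a (v1 + v2) = nAC a v1 + nAC a v2" using U3 by metis
  have nAC_leib: "\<And>a f v. nAC a (smC f v) = smC f (nAC a v) + smC (anchorA a f) v" using U3 by metis
  have dB_nAC: "\<And>a c. dB (nAC a c) = nAB a (dB c)" using U3 by metis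
  have curvAC: "\<And>a1 a2 c. curvature brkA nAC a1 a2 c = RA a1 a2 (dB c)" using U3 by metis
  note U4 = assms(4)[unfolded two_representation_def module_hom_def is_connection_def]
  have dA_add: "\<And>x y. dA (x + y) = dA x + dA y" using U4 by metis
  have dA_sm: "\<And>f x. dA (smC f x) = smA f (dA x)" using U4 by metis
  have nBC_add1: "\<And>a1 a2 v. nBC (a1 + a2) v = nBC a1 v + nBC a2 v" using U4 by metis
  have nBC_sm1: "\<And>f a v. nBC (smB f a) v = smC f (nBC a v)" using U4 by metis
  have nBC_add2: "\<And>a v1 v2. nBC a (v1 + v2) = nBC a v1 + nBC a v2" using U4 by metis
  have dA_nBC: "\<And>a c. dA (nBC a c) = nBA a (dA c)" using U4 by metis
  have curvBC: "\<And>a1 a2 c. curvature brkB nBC a1 a2 c = RB a1 a2 (dA c)" using U4 by metis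
  note U5 = assms(5)[unfolded matched_pair_def]
  have M1: "\<And>c. anchorA (dA c) = anchorB (dB c)" using U5 by metis
  have M2: "\<And>c1 c2. nAC (dA c1) c2 - nBC (dB c2) c1 = - nAC (dA c2) c1 + nBC (dB c1) c2" using U5 by metis
  have M3: "\<And>a c. brkA a (dA c) = dA (nAC a c) - nBA (dB c) a" using U5 by metis
  have M4: "\<And>b c. brkB b (dB c) = dB (nBC b c) - nAB (dA c) b" using U5 by metis
  have M6: "\<And>a b c. nBC b (nAC a c) - nAC a (nBC b c) - nAC (nBA b a) c + nBC (nAB a b) c
                = RB b (dB c) a - RA a (dA c) b" using U5 by metis
  from MC have smC_add: "\<And>f x y. smC f (x + y) = smC f x + smC f y"
    unfolding module_over_def by auto
  have smC_diff: "\<And>f x y. smC f (x - y) = smC f x - smC f y"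
    by (rule hom_diff(1), rule smC_add)
  have dA_diff: "\<And>x y. dA (x - y) = dA x - dA y" by (rule hom_diff(1), rule dA_add)
  have dB_diff: "\<And>x y. dB (x - y) = dB x - dB y" by (rule hom_diff(1), rule dB_add)
  have nAC_diff2: "\<And>a x y. nAC a (x - y) = nAC a x - nAC a y" by (rule hom_diff(1), rule nAC_add2)
  have nBC_neg1: "\<And>x c. nBC (- x) c = - nBC x c" by (rule hom_diff(2), rule nBC_add1)
  define brkC where "brkC = (\<lambda>c1 c2. nAC (dA c1) c2 - nBC (dB c2) c1)"
  have dA_brk: "\<And>c1 c2. dA (brkC c1 c2) = brkA (dA c1) (dA c2)"
    unfolding brkC_def dA_diff dA_nBC using M3 by (simp add: algebra_simps)
  have dB_brk: "\<And>c1 c2. dB (brkC c1 c2) = brkB (dB c1) (dB c2)"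
  proof -
    fix c1 c2
    have "dB (nBC (dB c2) c1) = brkB (dB c2) (dB c1) + nAB (dA c1) (dB c2)"
      using M4[of "dB c2" c1] by (simp add: algebra_simps)
    then show "dB (brkC c1 c2) = brkB (dB c1) (dB c2)"
      unfolding brkC_def dB_diff dB_nAC using skewB[of "dB c2" "dB c1"] by simp
  qed
  have jac: "brkC c1 (brkC c2 c3) = brkC (brkC c1 c2) c3 + brkC c2 (brkC c1 c3)" for c1 c2 c3
  proof -
    define c' where "c' = nBC (dB c3) c1"
    have L: "brkC c1 (brkC c2 c3) = nAC (dA c1) (nAC (dA c2) c3) - nAC (dA c1) (nBC (dB c3) c2)
              - nBC (brkB (dB c2) (dB c3)) c1"
      using dB_brk[of c2 c3] unfolding brkC_def nAC_diff2 by simp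
    have R1: "brkC (brkC c1 c2) c3 = nAC (brkA (dA c1) (dA c2)) c3 - nBC (dB c3) (nAC (dA c1) c2)
              + nBC (dB c3) (nBC (dB c2) c1)"
      using dA_brk[of c1 c2] unfolding brkC_def
      by (simp add: hom_diff(1)[of "nBC (dB c3)", OF nBC_add2])
    have R2: "brkC c2 (brkC c1 c3) = nAC (dA c2) (nAC (dA c1) c3) - nAC (dA c2) c'
              - nBC (brkB (dB c1) (dB c3)) c2"
      using dB_brk[of c1 c3] unfolding brkC_def nAC_diff2 c'_def by simp
    have X1: "nAC (dA c1) (nAC (dA c2) c3) = RA (dA c1) (dA c2) (dB c3) + nAC (dA c2) (nAC (dA c1) c3)
              + nAC (brkA (dA c1) (dA c2)) c3"
      using curvAC[of "dA c1" "dA c2" c3] unfolding curvature_def by (simp add: algebra_simps)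
    have X2: "nBC (dB c3) (nAC (dA c1) c2) = RB (dB c3) (dB c2) (dA c1) - RA (dA c1) (dA c2) (dB c3)
              + nAC (dA c1) (nBC (dB c3) c2) + nAC (nBA (dB c3) (dA c1)) c2
              - nBC (nAB (dA c1) (dB c3)) c2"
      using M6[of "dB c3" "dA c1" c2] by (simp add: algebra_simps)
    have X3: "nBC (dB c3) (nBC (dB c2) c1) = RB (dB c3) (dB c2) (dA c1) + nBC (dB c2) c'
              - nBC (brkB (dB c2) (dB c3)) c1"
      using curvBC[of "dB c3" "dB c2" c1] skewB[of "dB c3" "dB c2"] nBC_neg1
      unfolding curvature_def c'_def by (simp add: algebra_simps)
    have dBc': "dB c' = brkB (dB c3) (dB c1) + nAB (dA c1) (dB c3)"
      using M4[of "dB c3" c1] unfolding c'_def by (simp add: algebra_simps)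
    have dAc': "dA c' = nBA (dB c3) (dA c1)" unfolding c'_def by (rule dA_nBC)
    have X4: "nAC (dA c2) c' = nBC (brkB (dB c3) (dB c1)) c2 + nBC (nAB (dA c1) (dB c3)) c2
              - nAC (nBA (dB c3) (dA c1)) c2 + nBC (dB c2) c'"
      using M2[of c2 c'] unfolding dBc' dAc' nBC_add1 by (simp add: algebra_simps)
    have X5: "nBC (brkB (dB c3) (dB c1)) c2 = - nBC (brkB (dB c1) (dB c3)) c2"
      using skewB[of "dB c3" "dB c1"] nBC_neg1 by simp
    show ?thesis
      unfolding L R1 R2 X1 X2 X3 X4 X5 by (simp add: algebra_simps)
  qed
  have LC: "lie_algebroid smC (\<lambda>c. anchorA (dA c)) brkC"
    unfolding lie_algebroid_def
  proof (intro conjI allI)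
    show "module_over smC" by (rule MC)
    show "\<And>e. is_vector_field (anchorA (dA e))" by (rule LA_vf)
    show "\<And>e1 e2 f. anchorA (dA (e1 + e2)) f = anchorA (dA e1) f + anchorA (dA e2) f"
      by (simp add: dA_add LA_add)
    show "\<And>g e f. anchorA (dA (smC g e)) f = g * anchorA (dA e) f"
      by (simp add: dA_sm LA_sm)
    show "\<And>e1 e2 e3. brkC (e1 + e2) e3 = brkC e1 e3 + brkC e2 e3"
      unfolding brkC_def by (simp add: dA_add nAC_add1 nBC_add2 algebra_simps)
    show "brkC e1 e2 = - brkC e2 e1" for e1 e2
      unfolding brkC_def using M2[of e1 e2] by (simp add: algebra_simps)
    show "\<And>e1 e2 e3. brkC e1 (brkC e2 e3) = brkC (brkC e1 e2) e3 + brkC e2 (brkC e1 e3)"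
      by (rule jac)
    show "\<And>e1 e2 f. brkC e1 (smC f e2) = smC f (brkC e1 e2) + smC (anchorA (dA e1) f) e2"
      unfolding brkC_def by (simp add: nAC_leib dB_sm nBC_sm1 smC_diff algebra_simps)
    show "\<And>e1 e2. anchorA (dA (brkC e1 e2)) = vf_bracket (anchorA (dA e1)) (anchorA (dA e2))"
      by (simp add: dA_brk LA_anch)
  qed
  have MA: "lie_algebroid_morphism smC (\<lambda>c. anchorA (dA c)) brkC smA anchorA brkA dA"
    unfolding lie_algebroid_morphism_def module_hom_def using dA_add dA_sm dA_brk by auto
  have MB: "lie_algebroid_morphism smC (\<lambda>c. anchorA (dA c)) brkC smB anchorB brkB dB"
    unfolding lie_algebroid_morphism_def module_hom_def using dB_add dB_sm dB_brk M1 by auto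
  show ?thesis using LC MA MB M1 unfolding brkC_def by blast
qed

end
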